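(* (i) For any $p$ with $3/(3+\gamma+2)<p\le\infty$ and any $\theta>2+3(1-1/p)$, for all $i,j$ and $v\in\mathbb R^3$, $$|(a_{ij}*f)(v)\,v_iv_j|+|(a_{ij}*f)(v)\,v_i|+|(a_{ij}*f)(v)|\lesssim\langle v\rangle^{\gamma+2}\|f\|_{L^p(\langle v\rangle^\theta)}.$$ (ii) For any $p$ with $3/(3+\gamma+1)<p\le\infty$ and any $\theta'>3(1-1/p)$, $$|(b_j*f)(v)|\lesssim\langle v\rangle^{\gamma+1}\|f\|_{L^p(\langle v\rangle^{\theta'})}.$$
   Context: Fix $\gamma\in[-3,-2)$. For $z\in\mathbb R^3$, $a_{ij}(z)=|z|^{\gamma+2}(\delta_{ij}-z_iz_j/|z|^2)$ and $b_i(z)=-2|z|^\gamma z_i$; convolutions are in $v\in\mathbb R^3$; in $(a_{ij}*f)v_iv_j$ and $(a_{ij}*f)v_i$ summation over repeated indices is understood. $\langle v\rangle=(1+|v|^2)^{1/2}$, $\|f\|_{L^p(m)}=\|mf\|_{L^p}$. $A\lesssim B$: $A\le CB$ with $C$ independent of $f$ and $v$. *)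

theory Defs
  imports "HOL-Analysis.Analysis" "HOL-Probability.Essential_Supremum"
begin

type_synonym R3 = "real ^ 3"

definition jbr :: "R3 \<Rightarrow> real" where
  "jbr v = sqrt (1 + (norm v)\<^sup>2)"

text \<open>Landau kernels a_ij(z) = |z|^(gamma+2) (delta_ij - z_i z_j/|z|^2), b_i(z) = -2|z|^gamma z_i
  (value at z = 0 is irrelevant, a null set; here it is 0).\<close>
definition akernel :: "real \<Rightarrow> 3 \<Rightarrow> 3 \<Rightarrow> R3 \<Rightarrow> real" where
  "akernel \<gamma> i j z = norm z powr (\<gamma> + 2) * ((if i = j then 1 else 0) - z $ i * z $ j / (norm z)\<^sup>2)"

definition bkernel :: "real \<Rightarrow> 3 \<Rightarrow> R3 \<Rightarrow> real" where
  "bkernel \<gamma> i z = - 2 * norm z powr \<gamma> * z $ i"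

definition conv :: "(R3 \<Rightarrow> real) \<Rightarrow> (R3 \<Rightarrow> real) \<Rightarrow> R3 \<Rightarrow> real" where
  "conv K f v = (\<integral>w. K (v - w) * f w \<partial>lborel)"

definition inv_exp :: "ennreal \<Rightarrow> real" where
  "inv_exp p = (if p = \<infinity> then 0 else 1 / enn2real p)"

definition wLp_norm :: "ennreal \<Rightarrow> (R3 \<Rightarrow> real) \<Rightarrow> (R3 \<Rightarrow> real) \<Rightarrow> ennreal" where
  "wLp_norm p m f =
     (if p = \<infinity> then esssup lborel (\<lambda>x. ennreal \<bar>m x * f x\<bar>)
      else (let I = (\<integral>\<^sup>+ x. ennreal (\<bar>m x * f x\<bar> powr enn2real p) \<partial>lborel)
            in if I = \<infinity> then \<infinity> else ennreal (enn2real I powr (1 / enn2real p))))"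

end

theory Submission
  imports Defs
begin


lemma jbr_ge1: "jbr v \<ge> 1"
  unfolding jbr_def by simp

lemma jbr_pos: "jbr v > 0"
  using jbr_ge1[of v] by linarith

lemma jbr_ge_norm: "norm v \<le> jbr v"
  unfolding jbr_def by (simp add: real_le_rsqrt)

lemma jbr_le: "jbr v \<le> 1 + norm v"
  unfolding jbr_def by (rule real_le_lsqrt) (auto simp: power2_eq_square algebra_simps)

lemma jbr_meas[measurable]: "jbr \<in> borel_measurable borel"
  unfolding jbr_def by measurable

lemma emeasure_cball_le: "emeasure lborel (cball (x::R3) r) \<le> ennreal (8 * r ^ 3)"
proof (cases "r \<ge> 0")
  case True
  have sub: "cball x r \<subseteq> cbox (x - r *\<^sub>R One) (x + r *\<^sub>R One)"
  proof
    fix y assume y: "y \<in> cball x r"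
    show "y \<in> cbox (x - r *\<^sub>R One) (x + r *\<^sub>R One)"
      unfolding mem_box
    proof
      fix b :: R3 assume b: "b \<in> Basis"
      have "\<bar>(y - x) \<bullet> b\<bar> \<le> r"
        using Basis_le_norm[OF b, of "y - x"] y by (simp add: dist_norm norm_minus_commute)
      then show "(x - r *\<^sub>R One) \<bullet> b \<le> y \<bullet> b \<and> y \<bullet> b \<le> (x + r *\<^sub>R One) \<bullet> b"
        using b by (simp add: inner_diff_left inner_add_left abs_le_iff)
    qed
  qed
  have "emeasure lborel (cball x r) \<le> emeasure lborel (cbox (x - r *\<^sub>R One) (x + r *\<^sub>R One))"
    by (rule emeasure_mono[OF sub]) auto
  also have "\<dots> = ennreal (\<Prod>b\<in>(Basis::R3 set). 2 * r)"
  proof -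
    have h1: "\<And>b::R3. b \<in> Basis \<Longrightarrow> (x + r *\<^sub>R One - (x - r *\<^sub>R One)) \<bullet> b = 2 * r"
      by (simp only: inner_diff_left inner_add_left inner_scaleR_left inner_sum_Basis)
    have h2: "\<And>b::R3. b \<in> Basis \<Longrightarrow> (x - r *\<^sub>R One) \<bullet> b \<le> (x + r *\<^sub>R One) \<bullet> b"
      using True by (simp only: inner_diff_left inner_add_left inner_scaleR_left inner_sum_Basis)
    have p1: "(\<Prod>b\<in>(Basis::R3 set). (x + r *\<^sub>R One - (x - r *\<^sub>R One)) \<bullet> b) = (\<Prod>b\<in>(Basis::R3 set). 2 * r)"
      by (rule prod.cong[OF refl]) (rule h1)
    have p2: "\<forall>b\<in>(Basis::R3 set). (x - r *\<^sub>R One) \<bullet> b \<le> (x + r *\<^sub>R One) \<bullet> b"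
      using h2 by blast
    show ?thesis
      unfolding emeasure_lborel_cbox_eq if_P[OF p2] p1 by (rule refl)
  qed
  also have "\<dots> = ennreal (8 * r ^ 3)"
    by (simp add: power_mult_distrib)
  finally show ?thesis .
next
  case False then show ?thesis by simp
qed

lemma exists_dyadic: "(d::real) \<ge> 1 \<Longrightarrow> \<exists>k::nat. 2 ^ k \<le> d \<and> d < 2 ^ (k + 1)"
proof -
  assume d: "d \<ge> 1"
  obtain n :: nat where n: "d < 2 ^ n" using real_arch_pow[of 2 d] by auto
  define m where "m = (LEAST n::nat. d < 2 ^ n)"
  have m1: "d < 2 ^ m" unfolding m_def by (rule LeastI[of _ n]) (rule n)
  have m0: "m \<noteq> 0" using m1 d by (cases m) auto
  have "\<not> d < 2 ^ (m - 1)" unfolding m_def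
    by (metis (mono_tags, lifting) m0 m_def diff_less not_less_Least zero_less_iff_neq_zero zero_less_one)
  then show ?thesis using m1 m0 by (intro exI[of _ "m - 1"]) auto
qed



lemma ennreal_le_suminf_term: "(f i :: ennreal) \<le> (\<Sum>k. f k)"
  using sum_le_suminf[OF summableI, of "{i}" f] by simp

lemma dyadic_integral:
  fixes a r :: "nat \<Rightarrow> real" and x :: R3
  shows "(\<integral>\<^sup>+ w. (\<Sum>k. ennreal (a k) * indicator (cball x (r k)) w) \<partial>lborel)
         \<le> (\<Sum>k. ennreal (a k) * ennreal (8 * r k ^ 3))"
proof -
  have "(\<integral>\<^sup>+ w. (\<Sum>k. ennreal (a k) * indicator (cball x (r k)) w) \<partial>lborel)
        = (\<Sum>k. \<integral>\<^sup>+ w. ennreal (a k) * indicator (cball x (r k)) w \<partial>lborel)"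
  proof (rule nn_integral_suminf)
    have [measurable]: "\<And>r. cball x r \<in> sets borel" by (simp add: borel_closed)
    show "\<And>k. (\<lambda>w. ennreal (a k) * indicator (cball x (r k)) w) \<in> borel_measurable lborel"
      by measurable
  qed
  also have "\<dots> = (\<Sum>k. ennreal (a k) * emeasure lborel (cball x (r k)))"
    by (subst nn_integral_cmult_indicator) auto
  also have "\<dots> \<le> (\<Sum>k. ennreal (a k) * ennreal (8 * r k ^ 3))"
    by (intro suminf_le mult_left_mono emeasure_cball_le) auto
  finally show ?thesis .
qed

lemma pow2_powr: "((2::real) ^ k) powr u = (2 powr u) ^ k"
proof -
  have e1: "(2::real)^k = 2 powr (real k)" by (simp add: powr_realpow)
  have e2: "(2 powr (real k)) powr u = (2 powr u)^k" by (simp add: powr_powr powr_power mult.commute)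
  show ?thesis unfolding e1 e2 ..
qed

lemma powr_div_pow2: "(R::real) > 0 \<Longrightarrow> (R / 2 ^ k) powr u = R powr u * (2 powr (- u)) ^ k"
  by (subst powr_divide) (simp_all add: pow2_powr powr_minus divide_inverse power_inverse)

lemma D1:
  fixes s R :: real and x :: R3
  assumes s: "-3 < s" "s < 0" and R: "R > 0"
  shows "(\<integral>\<^sup>+ w. ennreal (norm (x - w) powr s * indicator (cball x R) w) \<partial>lborel)
         \<le> ennreal (8 * 2 powr (-s) / (1 - 2 powr (-(s+3))) * R powr (s + 3))"
proof -
  define a where "a k = (R / 2 ^ (k+1)) powr s" for k :: nat
  define r where "r k = R / 2 ^ k" for k :: nat
  define \<rho> where "\<rho> = 2 powr (-(s+3))"
  have \<rho>: "0 < \<rho>" "\<rho> < 1" unfolding \<rho>_def using s powr_less_mono[of "-(s+3)" 0 2] by auto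
  have pw: "ennreal (norm (x - w) powr s * indicator (cball x R) w)
        \<le> (\<Sum>k. ennreal (a k) * indicator (cball x (r k)) w)" for w
  proof (cases "norm (x - w) = 0 \<or> norm (x - w) > R")
    case True
    then show ?thesis by (auto simp: dist_norm)
  next
    case False
    then have d: "0 < norm (x - w)" "norm (x - w) \<le> R" by auto
    then have "R / norm (x - w) \<ge> 1" by simp
    then obtain k :: nat where k: "2 ^ k \<le> R / norm (x - w)" "R / norm (x - w) < 2 ^ (k + 1)"
      using exists_dyadic by blast
    have k1: "norm (x - w) \<le> r k" using k(1) d unfolding r_def by (simp add: field_simps)
    have k2: "R / 2 ^ (k+1) < norm (x - w)" using k(2) d by (simp add: field_simps)
    have "norm (x - w) powr s \<le> a k"
      unfolding a_def using k2 s R by (intro powr_mono2') auto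
    then have "ennreal (norm (x - w) powr s * indicator (cball x R) w) \<le> ennreal (a k) * indicator (cball x (r k)) w"
      using k1 d by (auto simp: dist_norm indicator_def intro!: ennreal_leI)
    also have "\<dots> \<le> (\<Sum>k. ennreal (a k) * indicator (cball x (r k)) w)"
      by (rule ennreal_le_suminf_term)
    finally show ?thesis .
  qed
  have trm: "a k * (8 * r k ^ 3) = (8 * 2 powr (-s) * R powr (s + 3)) * \<rho> ^ k" for k
  proof -
    have e: "R / 2 ^ (k+1) = (R / 2 ^ k) / 2" by simp
    have "a k = (R / 2 ^ k) powr s * 2 powr (-s)"
      unfolding a_def e powr_divide by (simp only: powr_minus divide_inverse)
    moreover have "r k ^ 3 = (R / 2 ^ k) powr 3"
      unfolding r_def using R by simp
    ultimately have "a k * (8 * r k ^ 3) = 8 * 2 powr (-s) * (R / 2 ^ k) powr (s + 3)"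
      by (simp add: powr_add)
    also have "\<dots> = (8 * 2 powr (-s) * R powr (s + 3)) * \<rho> ^ k"
      unfolding \<rho>_def using R by (simp add: powr_div_pow2)
    finally show ?thesis .
  qed
  have summ: "summable (\<lambda>k. (8 * 2 powr (-s) * R powr (s + 3)) * \<rho> ^ k)"
    using \<rho> by (intro summable_mult summable_geometric) auto
  have "(\<integral>\<^sup>+ w. ennreal (norm (x - w) powr s * indicator (cball x R) w) \<partial>lborel)
        \<le> (\<integral>\<^sup>+ w. (\<Sum>k. ennreal (a k) * indicator (cball x (r k)) w) \<partial>lborel)"
    by (intro nn_integral_mono pw)
  also have "\<dots> \<le> (\<Sum>k. ennreal (a k) * ennreal (8 * r k ^ 3))"
    by (rule dyadic_integral)
  also have "\<dots> = (\<Sum>k. ennreal ((8 * 2 powr (-s) * R powr (s + 3)) * \<rho> ^ k))"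
  proof (rule suminf_cong)
    fix k
    have "a k \<ge> 0" unfolding a_def by simp
    then show "ennreal (a k) * ennreal (8 * r k ^ 3) = ennreal (8 * 2 powr - s * R powr (s + 3) * \<rho> ^ k)"
      by (simp add: ennreal_mult'[symmetric] trm)
  qed
  also have "\<dots> = ennreal (\<Sum>k. (8 * 2 powr (-s) * R powr (s + 3)) * \<rho> ^ k)"
    using summ \<rho> by (intro suminf_ennreal2) auto
  also have "(\<Sum>k. (8 * 2 powr (-s) * R powr (s + 3)) * \<rho> ^ k) = 8 * 2 powr (-s) / (1 - \<rho>) * R powr (s + 3)"
    using \<rho> by (simp add: suminf_mult suminf_geometric summable_geometric)
  finally show ?thesis unfolding \<rho>_def .
qed

lemma D2:
  fixes c :: real
  assumes c: "c > 3"
  shows "(\<integral>\<^sup>+ w. ennreal (jbr w powr (-c)) \<partial>lborel) \<le> ennreal (64 / (1 - 2 powr (3 - c)))"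
proof -
  define a where "a k = (2 ^ k) powr (-c)" for k :: nat
  define r where "r k = (2::real) ^ (k + 1)" for k :: nat
  define \<rho> where "\<rho> = 2 powr (3 - c)"
  have \<rho>: "0 < \<rho>" "\<rho> < 1" unfolding \<rho>_def using c powr_less_mono[of "3 - c" 0 2] by auto
  have pw: "ennreal (jbr w powr (-c))
        \<le> (\<Sum>k. ennreal (a k) * indicator (cball (0::R3) (r k)) w)" for w
  proof -
    obtain k :: nat where k: "jbr w powr (-c) \<le> a k" "norm w \<le> r k"
    proof (cases "norm w < 1")
      case True
      have "jbr w powr (-c) \<le> 1" using powr_mono2'[of "-c" 1 "jbr w"] jbr_ge1[of w] c by simp
      moreover have "norm w \<le> r 0" using True unfolding r_def by simp
      ultimately show ?thesis using that[of 0] unfolding a_def by simp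
    next
      case False
      then obtain k :: nat where k: "2 ^ k \<le> norm w" "norm w < 2 ^ (k + 1)"
        using exists_dyadic[of "norm w"] by auto
      have "jbr w powr (-c) \<le> a k"
        unfolding a_def using k jbr_ge_norm[of w] c by (intro powr_mono2') auto
      then show ?thesis using that[of k] k unfolding r_def by simp
    qed
    then have "ennreal (jbr w powr (-c)) \<le> ennreal (a k) * indicator (cball (0::R3) (r k)) w"
      by (auto simp: indicator_def intro!: ennreal_leI)
    also have "\<dots> \<le> (\<Sum>k. ennreal (a k) * indicator (cball (0::R3) (r k)) w)"
      by (rule ennreal_le_suminf_term)
    finally show ?thesis .
  qed
  have trm: "a k * (8 * r k ^ 3) = 64 * \<rho> ^ k" for k
  proof -
    have "(2::real) ^ (k + 1) = 2 * 2 ^ k" by simp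
    then have "a k * (8 * r k ^ 3) = 64 * (((2::real) ^ k) powr (-c) * (2 ^ k) powr 3)"
      unfolding a_def r_def by (simp add: power_mult_distrib)
    also have "\<dots> = 64 * \<rho> ^ k"
      unfolding \<rho>_def by (simp only: pow2_powr flip: powr_add power_mult_distrib) simp
    finally show ?thesis .
  qed
  have summ: "summable (\<lambda>k. 64 * \<rho> ^ k)"
    using \<rho> by (intro summable_mult summable_geometric) auto
  have "(\<integral>\<^sup>+ w. ennreal (jbr w powr (-c)) \<partial>lborel)
        \<le> (\<integral>\<^sup>+ w. (\<Sum>k. ennreal (a k) * indicator (cball (0::R3) (r k)) w) \<partial>lborel)"
    by (intro nn_integral_mono pw)
  also have "\<dots> \<le> (\<Sum>k. ennreal (a k) * ennreal (8 * r k ^ 3))"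
    by (rule dyadic_integral)
  also have "\<dots> = (\<Sum>k. ennreal (64 * \<rho> ^ k))"
  proof (rule suminf_cong)
    fix k
    have "a k \<ge> 0" unfolding a_def by simp
    then show "ennreal (a k) * ennreal (8 * r k ^ 3) = ennreal (64 * \<rho> ^ k)"
      by (simp add: ennreal_mult'[symmetric] trm)
  qed
  also have "\<dots> = ennreal (\<Sum>k. 64 * \<rho> ^ k)"
    using summ \<rho> by (intro suminf_ennreal2) auto
  also have "(\<Sum>k. 64 * \<rho> ^ k) = 64 / (1 - \<rho>)"
    using \<rho> by (simp add: suminf_mult suminf_geometric summable_geometric)
  finally show ?thesis unfolding \<rho>_def .
qed



lemma jbr_lower:
  assumes "norm (v - w) \<le> jbr v / 2"
  shows "jbr v / 6 \<le> jbr w"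
proof (cases "norm v \<ge> 2")
  case True
  have "norm w \<ge> norm v - norm (v - w)" using norm_triangle_ineq2[of v w]
    by (metis norm_minus_commute norm_triangle_ineq3 add_diff_cancel_left' diff_add_cancel diff_le_eq norm_triangle_ineq4)
  moreover have "jbr v / 2 \<le> (1 + norm v) / 2" using jbr_le[of v] by simp
  ultimately have "norm w \<ge> norm v - (1 + norm v) / 2" using assms by linarith
  then have "norm w \<ge> (1 + norm v) / 6" using True by (auto simp: field_simps)
  moreover have "jbr v / 6 \<le> (1 + norm v) / 6" using jbr_le[of v] by simp
  ultimately show ?thesis using jbr_ge_norm[of w] by linarith
next
  case False
  then have "jbr v / 6 \<le> (1 + norm v) / 6" using jbr_le[of v] by simp
  then show ?thesis using jbr_ge1[of w] False by (simp add: field_simps)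
qed

lemma jbr_meas'[measurable]: "(\<lambda>x. jbr (f x)) \<in> borel_measurable M" if [measurable]: "f \<in> borel_measurable M" for f :: "'a \<Rightarrow> R3"
  using that by measurable

lemma kernel_est:
  fixes s c :: real
  assumes s: "-3 < s" "s < 0" and c: "c > 3"
  shows "\<exists>CK>0. \<forall>v::R3. (\<integral>\<^sup>+ w. ennreal (norm (v - w) powr s * jbr w powr (-c)) \<partial>lborel)
              \<le> ennreal (CK * jbr v powr s)"
proof -
  define T where "T = 64 / (1 - 2 powr (3 - c))"
  define D where "D = 8 * 2 powr (-s) / (1 - 2 powr (-(s+3)))"
  have T: "T > 0" unfolding T_def using c powr_less_mono[of "3 - c" 0 2] by auto
  have D: "D > 0" unfolding D_def using s powr_less_mono[of "-(s+3)" 0 2] by auto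
  define CK where "CK = 2 powr (-s) * T + 6 powr c * D * (1/2) powr (s+3)"
  have CK: "CK > 0" unfolding CK_def using T D by (intro add_pos_pos) auto
  have main: "(\<integral>\<^sup>+ w. ennreal (norm (v - w) powr s * jbr w powr (-c)) \<partial>lborel)
              \<le> ennreal (CK * jbr v powr s)" for v :: R3
  proof -
    define A where "A = 2 powr (-s) * jbr v powr s"
    define B where "B = 6 powr c * jbr v powr (-c)"
    have A: "A \<ge> 0" and B: "B \<ge> 0" unfolding A_def B_def by auto
    have jv: "jbr v > 0" using jbr_pos .
    have pw: "norm (v - w) powr s * jbr w powr (-c)
        \<le> A * jbr w powr (-c) + B * (norm (v - w) powr s * indicator (cball v (jbr v / 2)) w)" for w
    proof (cases "norm (v - w) > jbr v / 2")
      case True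
      have "norm (v - w) powr s \<le> (jbr v / 2) powr s"
        using True jv s by (intro powr_mono2') auto
      also have "(jbr v / 2) powr s = A"
        unfolding A_def powr_divide powr_minus by (simp add: divide_inverse mult.commute)
      finally have "norm (v - w) powr s * jbr w powr (-c) \<le> A * jbr w powr (-c)"
        by (intro mult_right_mono) auto
      moreover have "0 \<le> B * (norm (v - w) powr s * indicator (cball v (jbr v / 2)) w)"
        using B by auto
      ultimately show ?thesis by linarith
    next
      case False
      then have "jbr v / 6 \<le> jbr w" by (intro jbr_lower) auto
      then have "jbr w powr (-c) \<le> (jbr v / 6) powr (-c)"
        using jv c by (intro powr_mono2') auto
      also have "(jbr v / 6) powr (-c) = B"
        unfolding B_def powr_divide powr_minus by (simp add: divide_inverse mult.commute)
      finally have "norm (v - w) powr s * jbr w powr (-c) \<le> B * (norm (v - w) powr s * indicator (cball v (jbr v / 2)) w)"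
        using False by (auto simp: dist_norm mult.commute intro!: mult_right_mono)
      moreover have "0 \<le> A * jbr w powr (-c)"
        using A by auto
      ultimately show ?thesis by linarith
    qed
    have [measurable]: "cball v r \<in> sets borel" for r by (simp add: borel_closed)
    have "(\<integral>\<^sup>+ w. ennreal (norm (v - w) powr s * jbr w powr (-c)) \<partial>lborel)
        \<le> (\<integral>\<^sup>+ w. ennreal A * ennreal (jbr w powr (-c))
               + ennreal B * ennreal (norm (v - w) powr s * indicator (cball v (jbr v / 2)) w) \<partial>lborel)"
    proof (rule nn_integral_mono)
      fix w
      have "ennreal (norm (v - w) powr s * jbr w powr (-c))
          \<le> ennreal (A * jbr w powr (-c) + B * (norm (v - w) powr s * indicator (cball v (jbr v / 2)) w))"
        by (rule ennreal_leI[OF pw])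
      also have "\<dots> = ennreal A * ennreal (jbr w powr (-c))
               + ennreal B * ennreal (norm (v - w) powr s * indicator (cball v (jbr v / 2)) w)"
        using A B by (simp add: ennreal_plus ennreal_mult)
      finally show "ennreal (norm (v - w) powr s * jbr w powr (-c))
          \<le> ennreal A * ennreal (jbr w powr (-c))
               + ennreal B * ennreal (norm (v - w) powr s * indicator (cball v (jbr v / 2)) w)" .
    qed
    also have "\<dots> = ennreal A * (\<integral>\<^sup>+ w. ennreal (jbr w powr (-c)) \<partial>lborel)
        + ennreal B * (\<integral>\<^sup>+ w. ennreal (norm (v - w) powr s * indicator (cball v (jbr v / 2)) w) \<partial>lborel)"
      by (subst nn_integral_add) (auto simp: nn_integral_cmult)
    also have "\<dots> \<le> ennreal A * ennreal T + ennreal B * ennreal (D * (jbr v / 2) powr (s + 3))"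
      using D2[OF c] D1[OF s, of "jbr v / 2" v] jv unfolding T_def D_def
      by (intro add_mono mult_left_mono) auto
    also have "\<dots> = ennreal (A * T + B * (D * (jbr v / 2) powr (s + 3)))"
      using A B T D by (simp add: ennreal_plus ennreal_mult)
    also have "\<dots> \<le> ennreal (CK * jbr v powr s)"
    proof (rule ennreal_leI)
      have e1: "jbr v / 2 = jbr v * (1/2)" by simp
      have e2: "(jbr v / 2) powr (s + 3) = jbr v powr (s + 3) * (1/2) powr (s + 3)"
        unfolding e1 by (rule powr_mult)
      have e3: "jbr v powr (-c) * jbr v powr (s + 3) = jbr v powr (s + 3 - c)"
        unfolding powr_add[symmetric] by simp
      have "jbr v powr (-c) * (jbr v / 2) powr (s + 3) = (1/2) powr (s+3) * jbr v powr (s + 3 - c)"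
        unfolding e2 e3[symmetric] by (simp only: mult_ac)
      also have "\<dots> \<le> (1/2) powr (s+3) * jbr v powr s"
        using jbr_ge1[of v] c by (intro mult_left_mono powr_mono) auto
      finally have X: "jbr v powr (-c) * (jbr v / 2) powr (s + 3) \<le> (1/2) powr (s+3) * jbr v powr s" .
      have "(6 powr c * D) * (jbr v powr (-c) * (jbr v / 2) powr (s + 3)) \<le> (6 powr c * D) * ((1/2) powr (s+3) * jbr v powr s)"
        using D by (intro mult_left_mono[OF X]) auto
      then have "B * (D * (jbr v / 2) powr (s + 3)) \<le> 6 powr c * D * (1/2) powr (s+3) * jbr v powr s"
        unfolding B_def by (simp only: mult_ac)
      then show "A * T + B * (D * (jbr v / 2) powr (s + 3)) \<le> CK * jbr v powr s"
        unfolding CK_def A_def by (simp add: algebra_simps)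
    qed
    finally show ?thesis .
  qed
  show ?thesis using CK main by blast
qed

lemma nn_integral_zero_factor:
  fixes F G :: "'a \<Rightarrow> real"
  assumes [measurable]: "F \<in> borel_measurable M" and F0: "\<And>x. F x \<ge> 0" and p: "p > 0"
    and I: "(\<integral>\<^sup>+x. ennreal (F x powr p) \<partial>M) = 0"
  shows "(\<integral>\<^sup>+x. ennreal (F x * G x) \<partial>M) = 0"
proof -
  have "AE x in M. ennreal (F x powr p) = 0"
    using I by (subst (asm) nn_integral_0_iff_AE) auto
  then have "AE x in M. F x = 0"
    by eventually_elim (use F0 in auto)
  then have "AE x in M. ennreal (F x * G x) = 0"
    by eventually_elim auto
  then show ?thesis by (simp add: nn_integral_0_iff_AE[symmetric] nn_integral_cong_AE)
qed

lemma holder_nn: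
  fixes F G :: "'a \<Rightarrow> real"
  assumes [measurable]: "F \<in> borel_measurable M" "G \<in> borel_measurable M"
    and F0: "\<And>x. F x \<ge> 0" and G0: "\<And>x. G x \<ge> 0"
    and pq: "p > 1" "q > 1" "1/p + 1/q = 1"
    and IA: "(\<integral>\<^sup>+x. ennreal (F x powr p) \<partial>M) = ennreal A" and A: "A \<ge> 0"
    and IB: "(\<integral>\<^sup>+x. ennreal (G x powr q) \<partial>M) = ennreal B" and B: "B \<ge> 0"
  shows "(\<integral>\<^sup>+x. ennreal (F x * G x) \<partial>M) \<le> ennreal (A powr (1/p) * B powr (1/q))"
proof (cases "A = 0 \<or> B = 0")
  case True
  then show ?thesis
  proof
    assume "A = 0"
    then show ?thesis using nn_integral_zero_factor[of F M p G] IA F0 pq by simp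
  next
    assume "B = 0"
    then have "(\<integral>\<^sup>+x. ennreal (G x * F x) \<partial>M) = 0"
      using nn_integral_zero_factor[of G M q F] IB G0 pq by simp
    then show ?thesis by (simp add: mult.commute)
  qed
next
  case False
  then have A': "A > 0" and B': "B > 0" using A B by auto
  define a where "a = A powr (1/p)"
  define b where "b = B powr (1/q)"
  have a: "a > 0" and b: "b > 0" unfolding a_def b_def using A' B' by auto
  have ap: "a powr p = A" unfolding a_def using A' pq by (simp add: powr_powr)
  have bq: "b powr q = B" unfolding b_def using B' pq by (simp add: powr_powr)
  have pw: "F x * G x \<le> (a * b / (p * A)) * F x powr p + (a * b / (q * B)) * G x powr q" for x
  proof -
    have "(F x / a) * (G x / b) \<le> (F x / a) powr p / p + (G x / b) powr q / q"
      using F0[of x] G0[of x] a b pq by (intro Youngs_inequality) auto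
    also have "(F x / a) powr p = F x powr p / A"
      using ap by (simp add: powr_divide)
    also have "(G x / b) powr q = G x powr q / B"
      using bq by (simp add: powr_divide)
    finally have "(F x / a) * (G x / b) \<le> F x powr p / A / p + G x powr q / B / q" .
    then have "a * b * ((F x / a) * (G x / b)) \<le> a * b * (F x powr p / A / p + G x powr q / B / q)"
      using a b by (intro mult_left_mono) auto
    then show ?thesis using a b by (simp add: field_simps)
  qed
  have c1: "a * b / (p * A) \<ge> 0" "a * b / (q * B) \<ge> 0" using a b A' B' pq by auto
  have "(\<integral>\<^sup>+x. ennreal (F x * G x) \<partial>M)
      \<le> (\<integral>\<^sup>+x. ennreal (a * b / (p * A)) * ennreal (F x powr p) + ennreal (a * b / (q * B)) * ennreal (G x powr q) \<partial>M)"
  proof (rule nn_integral_mono)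
    fix x
    show "ennreal (F x * G x) \<le> ennreal (a * b / (p * A)) * ennreal (F x powr p) + ennreal (a * b / (q * B)) * ennreal (G x powr q)"
    proof -
      have "ennreal (F x * G x) \<le> ennreal (a * b / (p * A) * F x powr p + a * b / (q * B) * G x powr q)"
        by (rule ennreal_leI[OF pw])
      also have "\<dots> = ennreal (a * b / (p * A) * F x powr p) + ennreal (a * b / (q * B) * G x powr q)"
        by (rule ennreal_plus; rule mult_nonneg_nonneg; use c1 in simp)
      also have "\<dots> = ennreal (a * b / (p * A)) * ennreal (F x powr p) + ennreal (a * b / (q * B)) * ennreal (G x powr q)"
        using c1 by (simp only: ennreal_mult powr_ge_zero)
      finally show ?thesis .
    qed
  qed
  also have "\<dots> = ennreal (a * b / (p * A)) * ennreal A + ennreal (a * b / (q * B)) * ennreal B"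
    by (subst nn_integral_add) (auto simp: nn_integral_cmult IA IB)
  also have "\<dots> = ennreal (a * b / (p * A) * A + a * b / (q * B) * B)"
  proof -
    have e1: "ennreal (a * b / (p * A)) * ennreal A = ennreal (a * b / (p * A) * A)"
      by (rule ennreal_mult[symmetric]) (use c1 A in auto)
    have e2: "ennreal (a * b / (q * B)) * ennreal B = ennreal (a * b / (q * B) * B)"
      by (rule ennreal_mult[symmetric]) (use c1 B in auto)
    have e3: "ennreal (a * b / (p * A) * A) + ennreal (a * b / (q * B) * B) = ennreal (a * b / (p * A) * A + a * b / (q * B) * B)"
      by (rule ennreal_plus[symmetric]) (use a b pq A B in auto)
    show ?thesis unfolding e1 e2 e3 ..
  qed
  also have "a * b / (p * A) * A + a * b / (q * B) * B = a * b * (1/p + 1/q)"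
    using A' B' by (simp add: field_simps)
  also have "\<dots> = a * b" using pq by simp
  finally show ?thesis unfolding a_def b_def .
qed



lemma meas_G[measurable]: "(\<lambda>x. norm (v - x) powr a * jbr x powr b) \<in> borel_measurable (lborel :: R3 measure)"
  by measurable

lemma M_fin:
  fixes a \<beta> \<theta> P :: real
  assumes a: "a < 0" and P: "P > 1" and c1: "a * (P/(P-1)) > -3" and c2: "(\<theta> - \<beta>) * (P/(P-1)) > 3"
  shows "\<exists>C>0. \<forall>(f::R3 \<Rightarrow> real) v. f \<in> borel_measurable lborel \<longrightarrow>
    (\<integral>\<^sup>+ w. ennreal (norm (v - w) powr a * jbr w powr \<beta> * \<bar>f w\<bar>) \<partial>lborel)
      \<le> ennreal (C * jbr v powr a) * wLp_norm (ennreal P) (\<lambda>x. jbr x powr \<theta>) f"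
proof -
  define q where "q = P / (P - 1)"
  have q: "q > 1" unfolding q_def using P by (simp add: field_simps)
  have pq: "1 / P + 1 / q = 1" unfolding q_def using P by (simp add: field_simps)
  have ke: "\<exists>CK>0. \<forall>v::R3. (\<integral>\<^sup>+ w. ennreal (norm (v - w) powr (a * q) * jbr w powr (-((\<theta> - \<beta>) * q))) \<partial>lborel)
              \<le> ennreal (CK * jbr v powr (a * q))"
    using kernel_est[of "a * q" "(\<theta> - \<beta>) * q"] c1 c2 a q unfolding q_def[symmetric]
    by (auto simp: mult_neg_pos)
  have m: "-((\<theta> - \<beta>) * q) = (\<beta> - \<theta>) * q" by (simp add: algebra_simps)
  obtain CK where CK: "CK > 0" and K: "\<And>v::R3. (\<integral>\<^sup>+ w. ennreal (norm (v - w) powr (a * q) * jbr w powr ((\<beta> - \<theta>) * q)) \<partial>lborel)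
              \<le> ennreal (CK * jbr v powr (a * q))"
    using ke unfolding m by blast
  define C where "C = CK powr (1/q)"
  have C: "C > 0" unfolding C_def using CK by simp
  have "f \<in> borel_measurable lborel \<longrightarrow>
    (\<integral>\<^sup>+ w. ennreal (norm (v - w) powr a * jbr w powr \<beta> * \<bar>f w\<bar>) \<partial>lborel)
      \<le> ennreal (C * jbr v powr a) * wLp_norm (ennreal P) (\<lambda>x. jbr x powr \<theta>) f" for f :: "R3 \<Rightarrow> real" and v
  proof
    assume [measurable]: "f \<in> borel_measurable lborel"
    define I where "I = (\<integral>\<^sup>+ x. ennreal (\<bar>jbr x powr \<theta> * f x\<bar> powr P) \<partial>lborel)"
    have Cv: "C * jbr v powr a > 0" using C jbr_pos[of v] by simp
    have W: "wLp_norm (ennreal P) (\<lambda>x. jbr x powr \<theta>) f = (if I = \<infinity> then \<infinity> else ennreal (enn2real I powr (1 / P)))"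
      unfolding wLp_norm_def I_def using P by (simp add: Let_def)
    show "(\<integral>\<^sup>+ w. ennreal (norm (v - w) powr a * jbr w powr \<beta> * \<bar>f w\<bar>) \<partial>lborel)
      \<le> ennreal (C * jbr v powr a) * wLp_norm (ennreal P) (\<lambda>x. jbr x powr \<theta>) f"
    proof (cases "I = \<infinity>")
      case True
      have ne: "ennreal (C * jbr v powr a) \<noteq> 0" using C jbr_pos[of v] by simp
      have "ennreal (C * jbr v powr a) * wLp_norm (ennreal P) (\<lambda>x. jbr x powr \<theta>) f = top"
        using W True ne by (simp add: ennreal_mult_top)
      then show ?thesis by simp
    next
      case False
      define A where "A = enn2real I"
      have It: "I < top" using False by (simp add: top.not_eq_extremum)
      have IA: "I = ennreal A" unfolding A_def using ennreal_enn2real[OF It] by simp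
      have A: "A \<ge> 0" unfolding A_def by simp
      define F where "F x = \<bar>jbr x powr \<theta> * f x\<bar>" for x
      define G where "G x = norm (v - x) powr a * jbr x powr (\<beta> - \<theta>)" for x
      have [measurable]: "F \<in> borel_measurable lborel" unfolding F_def by measurable
      have [measurable]: "G \<in> borel_measurable lborel" unfolding G_def by measurable
      have FG: "norm (v - w) powr a * jbr w powr \<beta> * \<bar>f w\<bar> = F w * G w" for w
      proof -
        have e: "jbr w powr \<beta> = jbr w powr \<theta> * jbr w powr (\<beta> - \<theta>)"
          unfolding powr_add[symmetric] by simp
        have e2: "\<bar>jbr w powr \<theta> * f w\<bar> = jbr w powr \<theta> * \<bar>f w\<bar>" by (simp add: abs_mult)
        show ?thesis unfolding F_def G_def e e2 by (simp only: mult_ac)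
      qed
      have Gq: "G x powr q = norm (v - x) powr (a * q) * jbr x powr ((\<beta> - \<theta>) * q)" for x
        unfolding G_def powr_mult powr_powr by (rule refl)
      have IG: "(\<integral>\<^sup>+ x. ennreal (G x powr q) \<partial>lborel) \<le> ennreal (CK * jbr v powr (a * q))"
        unfolding Gq by (rule K)
      define B where "B = enn2real (\<integral>\<^sup>+ x. ennreal (G x powr q) \<partial>lborel)"
      have lt: "(\<integral>\<^sup>+ x. ennreal (G x powr q) \<partial>lborel) < top"
        using le_less_trans[OF IG ennreal_less_top] .
      have IB: "(\<integral>\<^sup>+ x. ennreal (G x powr q) \<partial>lborel) = ennreal B"
        unfolding B_def using lt by simp
      have B: "B \<ge> 0" unfolding B_def by simp
      have Ble: "B \<le> CK * jbr v powr (a * q)" using IG IB CK by simp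
      have "(\<integral>\<^sup>+ w. ennreal (norm (v - w) powr a * jbr w powr \<beta> * \<bar>f w\<bar>) \<partial>lborel)
          = (\<integral>\<^sup>+ w. ennreal (F w * G w) \<partial>lborel)" by (simp add: FG)
      also have "\<dots> \<le> ennreal (A powr (1/P) * B powr (1/q))"
        by (rule holder_nn[OF _ _ _ _ P q pq _ A IB B]) (auto simp: F_def G_def IA[symmetric] I_def)
      also have "\<dots> \<le> ennreal (A powr (1/P) * (C * jbr v powr a))"
      proof (rule ennreal_leI, rule mult_left_mono)
        have "B powr (1/q) \<le> (CK * jbr v powr (a * q)) powr (1/q)"
          using Ble B q by (intro powr_mono2) auto
        also have "\<dots> = C * jbr v powr a"
          unfolding C_def using CK q by (simp add: powr_mult powr_powr)
        finally show "B powr (1/q) \<le> C * jbr v powr a" .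
      qed auto
      also have "\<dots> = ennreal (C * jbr v powr a) * wLp_norm (ennreal P) (\<lambda>x. jbr x powr \<theta>) f"
        using W False Cv A unfolding A_def by (simp add: ennreal_mult mult.commute)
      finally show ?thesis .
    qed
  qed
  then show ?thesis using C by blast
qed

lemma M_inf:
  fixes a \<beta> \<theta> :: real
  assumes a: "a < 0" "-3 < a" and c: "\<theta> - \<beta> > 3"
  shows "\<exists>C>0. \<forall>(f::R3 \<Rightarrow> real) v. f \<in> borel_measurable lborel \<longrightarrow>
    (\<integral>\<^sup>+ w. ennreal (norm (v - w) powr a * jbr w powr \<beta> * \<bar>f w\<bar>) \<partial>lborel)
      \<le> ennreal (C * jbr v powr a) * wLp_norm \<infinity> (\<lambda>x. jbr x powr \<theta>) f"
proof -
  obtain CK where CK: "CK > 0" and K: "\<And>v::R3. (\<integral>\<^sup>+ w. ennreal (norm (v - w) powr a * jbr w powr (\<beta> - \<theta>)) \<partial>lborel)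
              \<le> ennreal (CK * jbr v powr a)"
    using kernel_est[of a "\<theta> - \<beta>"] a c unfolding minus_diff_eq by auto
  have "f \<in> borel_measurable lborel \<longrightarrow>
    (\<integral>\<^sup>+ w. ennreal (norm (v - w) powr a * jbr w powr \<beta> * \<bar>f w\<bar>) \<partial>lborel)
      \<le> ennreal (CK * jbr v powr a) * wLp_norm \<infinity> (\<lambda>x. jbr x powr \<theta>) f" for f :: "R3 \<Rightarrow> real" and v
  proof
    assume [measurable]: "f \<in> borel_measurable lborel"
    define E where "E = esssup lborel (\<lambda>x. ennreal \<bar>jbr x powr \<theta> * f x\<bar>)"
    have W: "wLp_norm \<infinity> (\<lambda>x. jbr x powr \<theta>) f = E" unfolding wLp_norm_def E_def by simp
    have AE: "AE x in lborel. ennreal \<bar>jbr x powr \<theta> * f x\<bar> \<le> E" unfolding E_def by (rule esssup_AE)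
    define G where "G x = norm (v - x) powr a * jbr x powr (\<beta> - \<theta>)" for x
    have [measurable]: "G \<in> borel_measurable lborel" unfolding G_def by measurable
    have FG: "norm (v - w) powr a * jbr w powr \<beta> * \<bar>f w\<bar> = \<bar>jbr w powr \<theta> * f w\<bar> * G w" for w
    proof -
      have e: "jbr w powr \<beta> = jbr w powr \<theta> * jbr w powr (\<beta> - \<theta>)"
        unfolding powr_add[symmetric] by simp
      have e2: "\<bar>jbr w powr \<theta> * f w\<bar> = jbr w powr \<theta> * \<bar>f w\<bar>" by (simp add: abs_mult)
      show ?thesis unfolding G_def e e2 by (simp only: mult_ac)
    qed
    have "(\<integral>\<^sup>+ w. ennreal (norm (v - w) powr a * jbr w powr \<beta> * \<bar>f w\<bar>) \<partial>lborel)
        = (\<integral>\<^sup>+ w. ennreal \<bar>jbr w powr \<theta> * f w\<bar> * ennreal (G w) \<partial>lborel)"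
    proof (intro nn_integral_cong)
      fix w
      have "G w \<ge> 0" unfolding G_def by simp
      then show "ennreal (norm (v - w) powr a * jbr w powr \<beta> * \<bar>f w\<bar>) = ennreal \<bar>jbr w powr \<theta> * f w\<bar> * ennreal (G w)"
        unfolding FG by (simp add: ennreal_mult)
    qed
    also have "\<dots> \<le> (\<integral>\<^sup>+ w. E * ennreal (G w) \<partial>lborel)"
      using AE by (intro nn_integral_mono_AE) (auto elim!: eventually_mono intro: mult_right_mono)
    also have "\<dots> = E * (\<integral>\<^sup>+ w. ennreal (G w) \<partial>lborel)"
      by (rule nn_integral_cmult) measurable
    also have "\<dots> \<le> E * ennreal (CK * jbr v powr a)"
      unfolding G_def by (intro mult_left_mono K) auto
    finally show "(\<integral>\<^sup>+ w. ennreal (norm (v - w) powr a * jbr w powr \<beta> * \<bar>f w\<bar>) \<partial>lborel)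
      \<le> ennreal (CK * jbr v powr a) * wLp_norm \<infinity> (\<lambda>x. jbr x powr \<theta>) f"
      unfolding W mult.commute[of "ennreal (CK * jbr v powr a)" E] .
  qed
  then show ?thesis using CK by blast
qed

lemma M_gen:
  fixes a \<beta> \<theta> :: real and p :: ennreal
  assumes a: "a < 0" "-3 < a" and p: "ennreal (3 / (3 + a)) < p" and c: "\<theta> - \<beta> > 3 * (1 - inv_exp p)"
  shows "\<exists>C>0. \<forall>(f::R3 \<Rightarrow> real) v. f \<in> borel_measurable lborel \<longrightarrow>
    (\<integral>\<^sup>+ w. ennreal (norm (v - w) powr a * jbr w powr \<beta> * \<bar>f w\<bar>) \<partial>lborel)
      \<le> ennreal (C * jbr v powr a) * wLp_norm p (\<lambda>x. jbr x powr \<theta>) f"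
proof (cases "p = \<infinity>")
  case True
  then show ?thesis using M_inf[OF a] c by (simp add: inv_exp_def)
next
  case False
  define P where "P = enn2real p"
  have pt: "p < top" using False by (simp add: top.not_eq_extremum)
  have pP: "p = ennreal P" unfolding P_def using ennreal_enn2real[OF pt] by simp
  have a3: "0 < 3 + a" using a by simp
  have P3: "3 / (3 + a) < P" using p a3 unfolding pP by (simp add: ennreal_less_iff)
  have "1 < 3 / (3 + a)" using a a3 by (simp add: field_simps)
  then have P1: "P > 1" using P3 by linarith
  have c1: "a * (P/(P-1)) > -3"
  proof -
    have "3 < P * (3 + a)" using P3 a3 by (simp add: field_simps)
    then show ?thesis using P1 by (simp add: field_simps)
  qed
  have "inv_exp p = 1 / P" unfolding inv_exp_def using False by (simp add: P_def)
  then have h0: "\<theta> - \<beta> > 3 * (1 - 1 / P)" using c by simp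
  have "3 * (1 - 1 / P) * P = 3 * (P - 1)" using P1 by (simp add: algebra_simps)
  then have h1: "3 * (P - 1) < (\<theta> - \<beta>) * P"
    using mult_strict_right_mono[OF h0, of P] P1 by simp
  have c2: "(\<theta> - \<beta>) * (P/(P-1)) > 3"
    using h1 P1 by (simp add: pos_less_divide_eq)
  show ?thesis using M_fin[OF a(1) P1 c1 c2] unfolding pP .
qed



lemma vec_nth_meas[measurable]: "(\<lambda>x::R3. x $ i) \<in> borel_measurable borel"
  by (intro borel_measurable_continuous_onI continuous_intros)

lemma akernel_meas[measurable]: "(\<lambda>w. akernel \<gamma> k l (v - w)) \<in> borel_measurable (lborel :: R3 measure)"
  unfolding akernel_def by measurable

lemma bkernel_meas[measurable]: "(\<lambda>w. bkernel \<gamma> k (v - w)) \<in> borel_measurable (lborel :: R3 measure)"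
  unfolding bkernel_def by measurable

lemma ak_abs: "\<bar>akernel \<gamma> i j z\<bar> \<le> norm z powr (\<gamma> + 2)"
proof (cases "z = 0")
  case True then show ?thesis by (simp add: akernel_def)
next
  case False
  define n where "n = norm z"
  have n: "n > 0" unfolding n_def using False by simp
  have zi: "\<bar>z $ i\<bar> \<le> n" "\<bar>z $ j\<bar> \<le> n" unfolding n_def by (simp_all add: component_le_norm_cart)
  have "\<bar>z $ i * z $ j\<bar> \<le> n * n" unfolding abs_mult using zi by (intro mult_mono) auto
  then have t: "\<bar>z $ i * z $ j / n\<^sup>2\<bar> \<le> 1" using n by (simp add: power2_eq_square abs_div)
  have d: "\<bar>(if i = j then 1 else 0) - z $ i * z $ j / n\<^sup>2\<bar> \<le> 1"
  proof (cases "i = j")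
    case True
    have "0 \<le> z $ i * z $ j / n\<^sup>2" using True by simp
    then show ?thesis using t True by (simp add: abs_le_iff)
  next
    case False then show ?thesis using t by simp
  qed
  have "\<bar>akernel \<gamma> i j z\<bar> = n powr (\<gamma> + 2) * \<bar>(if i = j then 1 else 0) - z $ i * z $ j / n\<^sup>2\<bar>"
    unfolding akernel_def n_def by (simp add: abs_mult)
  also have "\<dots> \<le> n powr (\<gamma> + 2) * 1" using d by (intro mult_left_mono) auto
  finally show ?thesis unfolding n_def by simp
qed

definition uvec :: "R3 \<Rightarrow> R3 \<Rightarrow> R3" where
  "uvec z v = v - ((z \<bullet> v) / (norm z)\<^sup>2) *\<^sub>R z"

lemma row_id: "(\<Sum>k\<in>UNIV. akernel \<gamma> k j z * v $ k) = norm z powr (\<gamma> + 2) * uvec z v $ j"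
proof -
  define e where "e = norm z powr (\<gamma> + 2)"
  define n2 where "n2 = (norm z)\<^sup>2"
  have "(\<Sum>k\<in>UNIV. akernel \<gamma> k j z * v $ k)
      = (\<Sum>k\<in>UNIV. e * (if k = j then v $ k else 0) - (e * (z $ j / n2)) * (z $ k * v $ k))"
  proof (rule sum.cong)
    fix k
    show "akernel \<gamma> k j z * v $ k = e * (if k = j then v $ k else 0) - (e * (z $ j / n2)) * (z $ k * v $ k)"
      unfolding akernel_def e_def n2_def by (cases "k = j") (simp_all add: algebra_simps)
  qed simp
  also have "\<dots> = e * (\<Sum>k\<in>UNIV. (if k = j then v $ k else 0)) - (e * (z $ j / n2)) * (\<Sum>k\<in>UNIV. z $ k * v $ k)"
    by (simp only: sum_subtractf sum_distrib_left[symmetric])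
  also have "\<dots> = e * uvec z v $ j"
    unfolding uvec_def n2_def by (simp add: inner_vec_def algebra_simps)
  finally show ?thesis unfolding e_def .
qed

lemma uvec_eq: "uvec (v - w) v = w - (((v - w) \<bullet> w) / (norm (v - w))\<^sup>2) *\<^sub>R (v - w)"
proof (cases "v = w")
  case True then show ?thesis by (simp add: uvec_def)
next
  case False
  define z where "z = v - w"
  have z: "z \<noteq> 0" "v = z + w" unfolding z_def using False by auto
  have n: "(norm z)\<^sup>2 \<noteq> 0" using z by simp
  have "z \<bullet> v = (norm z)\<^sup>2 + z \<bullet> w" unfolding z(2) by (simp add: inner_add_right power2_norm_eq_inner)
  then have "(z \<bullet> v) / (norm z)\<^sup>2 = 1 + (z \<bullet> w) / (norm z)\<^sup>2" using n by (simp add: field_simps)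
  then have "uvec z v = w - ((z \<bullet> w) / (norm z)\<^sup>2) *\<^sub>R z"
    unfolding uvec_def using z(2) by (simp add: scaleR_add_left algebra_simps)
  then show ?thesis unfolding z_def .
qed

lemma uvec_norm: "norm (uvec (v - w) v) \<le> 2 * norm w"
proof (cases "v = w")
  case True then show ?thesis by (simp add: uvec_def)
next
  case False
  define z where "z = v - w"
  have nz: "norm z > 0" unfolding z_def using False by simp
  have "norm (((z \<bullet> w) / (norm z)\<^sup>2) *\<^sub>R z) = \<bar>z \<bullet> w\<bar> / (norm z)\<^sup>2 * norm z"
    by (simp add: abs_div)
  also have "\<dots> \<le> (norm z * norm w) / (norm z)\<^sup>2 * norm z"
    using Cauchy_Schwarz_ineq2[of z w] nz by (intro mult_right_mono divide_right_mono) auto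
  also have "\<dots> = norm w" using nz by (simp add: power2_eq_square)
  finally have "norm (((z \<bullet> w) / (norm z)\<^sup>2) *\<^sub>R z) \<le> norm w" .
  then have "norm (w - ((z \<bullet> w) / (norm z)\<^sup>2) *\<^sub>R z) \<le> 2 * norm w"
    using norm_triangle_ineq4[of w "((z \<bullet> w) / (norm z)\<^sup>2) *\<^sub>R z"] by linarith
  then show ?thesis unfolding uvec_eq z_def .
qed

lemma uvec_inner: "\<bar>uvec (v - w) v \<bullet> v\<bar> \<le> 2 * (norm w)\<^sup>2"
proof (cases "v = w")
  case True then show ?thesis by (simp add: uvec_def power2_norm_eq_inner)
next
  case False
  define z where "z = v - w"
  define u where "u = uvec z v"
  have nz: "norm z > 0" unfolding z_def using False by simp
  have u: "u = w - ((z \<bullet> w) / (norm z)\<^sup>2) *\<^sub>R z" unfolding u_def z_def by (rule uvec_eq)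
  have zz: "z \<bullet> z \<noteq> 0" using nz by simp
  have zu: "u \<bullet> z = 0"
    unfolding u inner_diff_left inner_scaleR_left power2_norm_eq_inner using zz
    by (simp add: inner_commute[of w z])
  have v: "v = z + w" unfolding z_def by simp
  have "u \<bullet> v = u \<bullet> w" unfolding v by (simp add: inner_add_right zu)
  then have "\<bar>u \<bullet> v\<bar> \<le> norm u * norm w" using Cauchy_Schwarz_ineq2[of u w] by simp
  also have "\<dots> \<le> 2 * norm w * norm w"
    using uvec_norm[of v w] unfolding u_def z_def by (intro mult_right_mono) auto
  finally show ?thesis unfolding u_def z_def by (simp add: power2_eq_square)
qed

lemma T1_id: "(\<Sum>k\<in>UNIV. \<Sum>l\<in>UNIV. akernel \<gamma> k l z * v $ k * v $ l) = norm z powr (\<gamma> + 2) * (uvec z v \<bullet> v)"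
proof -
  have "(\<Sum>k\<in>UNIV. \<Sum>l\<in>UNIV. akernel \<gamma> k l z * v $ k * v $ l) = (\<Sum>l\<in>UNIV. (\<Sum>k\<in>UNIV. akernel \<gamma> k l z * v $ k) * v $ l)"
    by (subst sum.swap) (simp add: sum_distrib_right)
  also have "\<dots> = (\<Sum>l\<in>UNIV. norm z powr (\<gamma> + 2) * (uvec z v $ l * v $ l))"
    by (simp add: row_id mult.assoc)
  also have "\<dots> = norm z powr (\<gamma> + 2) * (uvec z v \<bullet> v)"
    by (simp add: inner_vec_def sum_distrib_left)
  finally show ?thesis .
qed

lemma bk_abs: "\<bar>bkernel \<gamma> j z\<bar> \<le> 2 * norm z powr (\<gamma> + 1)"
proof (cases "z = 0")
  case True then show ?thesis by (simp add: bkernel_def)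
next
  case False
  have "\<bar>bkernel \<gamma> j z\<bar> = 2 * norm z powr \<gamma> * \<bar>z $ j\<bar>" by (simp add: bkernel_def abs_mult)
  also have "\<dots> \<le> 2 * norm z powr \<gamma> * norm z" by (intro mult_left_mono component_le_norm_cart) auto
  also have "\<dots> = 2 * norm z powr (\<gamma> + 1)" using False by (simp add: powr_add mult.assoc)
  finally show ?thesis .
qed

lemma abs_int_le:
  fixes h :: "R3 \<Rightarrow> real"
  shows "ennreal \<bar>\<integral> w. h w \<partial>lborel\<bar> \<le> (\<integral>\<^sup>+ w. ennreal \<bar>h w\<bar> \<partial>lborel)"
proof (cases "integrable lborel h")
  case True
  then show ?thesis using integral_norm_bound_ennreal[OF True] by simp
next
  case False
  then show ?thesis by (simp add: not_integrable_integral_eq)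
qed

lemma conv_sum_exchange:
  fixes K :: "'i \<Rightarrow> R3 \<Rightarrow> real" and c :: "'i \<Rightarrow> real"
  assumes S: "finite S" and int: "\<And>k. k \<in> S \<Longrightarrow> integrable lborel (\<lambda>w. K k (v - w) * f w)"
  shows "(\<Sum>k\<in>S. conv (K k) f v * c k) = (\<integral> w. (\<Sum>k\<in>S. K k (v - w) * c k) * f w \<partial>lborel)"
proof -
  have "(\<Sum>k\<in>S. conv (K k) f v * c k) = (\<Sum>k\<in>S. \<integral> w. K k (v - w) * f w * c k \<partial>lborel)"
    unfolding conv_def by simp
  also have "\<dots> = (\<integral> w. (\<Sum>k\<in>S. K k (v - w) * f w * c k) \<partial>lborel)"
    by (subst Bochner_Integration.integral_sum) (use int in \<open>auto intro: integrable_mult_left integrable_mult_right\<close>)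
  also have "\<dots> = (\<integral> w. (\<Sum>k\<in>S. K k (v - w) * c k) * f w \<partial>lborel)"
    by (intro Bochner_Integration.integral_cong refl) (simp add: sum_distrib_right sum_distrib_left mult_ac)
  finally show ?thesis .
qed



lemma nn_cmult_real:
  fixes g :: "R3 \<Rightarrow> real"
  assumes [measurable]: "g \<in> borel_measurable lborel" and c: "c \<ge> 0"
  shows "(\<integral>\<^sup>+ w. ennreal (c * g w) \<partial>lborel) = ennreal c * (\<integral>\<^sup>+ w. ennreal (g w) \<partial>lborel)"
proof -
  have "(\<integral>\<^sup>+ w. ennreal (c * g w) \<partial>lborel) = (\<integral>\<^sup>+ w. ennreal c * ennreal (g w) \<partial>lborel)"
    using c by (intro nn_integral_cong) (simp add: ennreal_mult')
  also have "\<dots> = ennreal c * (\<integral>\<^sup>+ w. ennreal (g w) \<partial>lborel)"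
    by (rule nn_integral_cmult) measurable
  finally show ?thesis .
qed

lemma jbr_sq: "jbr w powr 2 = (jbr w)\<^sup>2" "1 \<le> (jbr w)\<^sup>2" "(norm w)\<^sup>2 \<le> (jbr w)\<^sup>2" "norm w \<le> (jbr w)\<^sup>2"
proof -
  show "jbr w powr 2 = (jbr w)\<^sup>2" using jbr_pos[of w] by simp
  show "1 \<le> (jbr w)\<^sup>2" using jbr_ge1[of w] by (simp add: one_le_power)
  show "(norm w)\<^sup>2 \<le> (jbr w)\<^sup>2" using jbr_ge_norm[of w] by (intro power_mono) auto
  have "jbr w \<le> (jbr w)\<^sup>2" using jbr_ge1[of w] by (simp add: power2_eq_square)
  then show "norm w \<le> (jbr w)\<^sup>2" using jbr_ge_norm[of w] by linarith
qed

lemma E_a: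
  fixes f :: "R3 \<Rightarrow> real" and v :: R3 and \<gamma> :: real
  assumes [measurable]: "f \<in> borel_measurable lborel"
  shows "ennreal (\<bar>\<Sum>k\<in>UNIV. \<Sum>l\<in>UNIV. conv (akernel \<gamma> k l) f v * v $ k * v $ l\<bar>
                    + \<bar>\<Sum>k\<in>UNIV. conv (akernel \<gamma> k j) f v * v $ k\<bar>
                    + \<bar>conv (akernel \<gamma> i j) f v\<bar>)
    \<le> 5 * (\<integral>\<^sup>+ w. ennreal (norm (v - w) powr (\<gamma> + 2) * jbr w powr 2 * \<bar>f w\<bar>) \<partial>lborel)"
proof -
  define J where "J = (\<integral>\<^sup>+ w. ennreal (norm (v - w) powr (\<gamma> + 2) * jbr w powr 2 * \<bar>f w\<bar>) \<partial>lborel)"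
  define e where "e w = norm (v - w) powr (\<gamma> + 2)" for w
  have [measurable]: "e \<in> borel_measurable lborel" unfolding e_def by measurable
  have Je: "J = (\<integral>\<^sup>+ w. ennreal (e w * (jbr w)\<^sup>2 * \<bar>f w\<bar>) \<partial>lborel)"
    unfolding J_def e_def by (simp add: jbr_sq)
  show ?thesis
  proof (cases "J = \<infinity>")
    case True
    then show ?thesis unfolding J_def[symmetric] by (simp add: ennreal_mult_top)
  next
    case False
    then have Jt: "J < \<infinity>" by (simp add: top.not_eq_extremum)
    have bnd: "\<bar>akernel \<gamma> k l (v - w) * f w\<bar> \<le> e w * (jbr w)\<^sup>2 * \<bar>f w\<bar>" for k l w
    proof -
      have "\<bar>akernel \<gamma> k l (v - w) * f w\<bar> \<le> e w * \<bar>f w\<bar>"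
        unfolding abs_mult e_def by (intro mult_right_mono ak_abs) auto
      also have "\<dots> \<le> e w * (jbr w)\<^sup>2 * \<bar>f w\<bar>"
      proof (intro mult_right_mono)
        show "e w \<le> e w * (jbr w)\<^sup>2"
          using mult_left_mono[of 1 "(jbr w)\<^sup>2" "e w"] jbr_sq(2)[of w] unfolding e_def by simp
      qed simp
      finally show ?thesis .
    qed
    have int: "integrable lborel (\<lambda>w. akernel \<gamma> k l (v - w) * f w)" for k l
    proof (rule integrableI_bounded)
      show "(\<lambda>w. akernel \<gamma> k l (v - w) * f w) \<in> borel_measurable lborel" by measurable
      have "(\<integral>\<^sup>+ w. ennreal (norm (akernel \<gamma> k l (v - w) * f w)) \<partial>lborel) \<le> J"
        unfolding Je by (intro nn_integral_mono ennreal_leI) (simp add: bnd)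
      then show "(\<integral>\<^sup>+ w. ennreal (norm (akernel \<gamma> k l (v - w) * f w)) \<partial>lborel) < \<infinity>"
        using Jt by (rule le_less_trans)
    qed
    have T1: "(\<Sum>k\<in>UNIV. \<Sum>l\<in>UNIV. conv (akernel \<gamma> k l) f v * v $ k * v $ l)
        = (\<integral> w. (\<Sum>p\<in>UNIV \<times> UNIV. akernel \<gamma> (fst p) (snd p) (v - w) * (v $ fst p * v $ snd p)) * f w \<partial>lborel)"
    proof -
      have "(\<Sum>k\<in>UNIV. \<Sum>l\<in>UNIV. conv (akernel \<gamma> k l) f v * v $ k * v $ l)
          = (\<Sum>p\<in>UNIV \<times> UNIV. conv (akernel \<gamma> (fst p) (snd p)) f v * (v $ fst p * v $ snd p))"
        by (subst sum.cartesian_product) (simp add: split_def mult.assoc)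
      also have "\<dots> = (\<integral> w. (\<Sum>p\<in>UNIV \<times> UNIV. akernel \<gamma> (fst p) (snd p) (v - w) * (v $ fst p * v $ snd p)) * f w \<partial>lborel)"
        by (rule conv_sum_exchange) (auto intro: int)
      finally show ?thesis .
    qed
    have H1: "(\<Sum>p\<in>UNIV \<times> UNIV. akernel \<gamma> (fst p) (snd p) (v - w) * (v $ fst p * v $ snd p))
        = e w * (uvec (v - w) v \<bullet> v)" for w
    proof -
      have "(\<Sum>p\<in>UNIV \<times> UNIV. akernel \<gamma> (fst p) (snd p) (v - w) * (v $ fst p * v $ snd p))
          = (\<Sum>k\<in>UNIV. \<Sum>l\<in>UNIV. akernel \<gamma> k l (v - w) * v $ k * v $ l)"
        by (subst sum.cartesian_product) (simp add: split_def mult.assoc)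
      then show ?thesis unfolding e_def T1_id .
    qed
    have "ennreal \<bar>\<Sum>k\<in>UNIV. \<Sum>l\<in>UNIV. conv (akernel \<gamma> k l) f v * v $ k * v $ l\<bar>
        \<le> (\<integral>\<^sup>+ w. ennreal \<bar>e w * (uvec (v - w) v \<bullet> v) * f w\<bar> \<partial>lborel)"
      unfolding T1 H1 by (rule abs_int_le)
    also have "\<dots> \<le> (\<integral>\<^sup>+ w. ennreal (2 * (e w * (jbr w)\<^sup>2 * \<bar>f w\<bar>)) \<partial>lborel)"
    proof (intro nn_integral_mono ennreal_leI)
      fix w
      have e0: "e w \<ge> 0" unfolding e_def by simp
      have "\<bar>uvec (v - w) v \<bullet> v\<bar> \<le> 2 * (jbr w)\<^sup>2"
        using uvec_inner[of v w] jbr_sq(3)[of w] by linarith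
      then have "\<bar>e w * (uvec (v - w) v \<bullet> v)\<bar> \<le> e w * (2 * (jbr w)\<^sup>2)"
        using e0 by (simp add: abs_mult mult_left_mono)
      then have "\<bar>e w * (uvec (v - w) v \<bullet> v)\<bar> * \<bar>f w\<bar> \<le> e w * (2 * (jbr w)\<^sup>2) * \<bar>f w\<bar>"
        by (intro mult_right_mono) auto
      then show "\<bar>e w * (uvec (v - w) v \<bullet> v) * f w\<bar> \<le> 2 * (e w * (jbr w)\<^sup>2 * \<bar>f w\<bar>)"
        by (simp add: abs_mult mult_ac)
    qed
    also have "\<dots> = 2 * J"
      unfolding Je by (subst nn_cmult_real) auto
    finally have B1: "ennreal \<bar>\<Sum>k\<in>UNIV. \<Sum>l\<in>UNIV. conv (akernel \<gamma> k l) f v * v $ k * v $ l\<bar> \<le> 2 * J" .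
    have T2: "(\<Sum>k\<in>UNIV. conv (akernel \<gamma> k j) f v * v $ k)
        = (\<integral> w. (\<Sum>k\<in>UNIV. akernel \<gamma> k j (v - w) * v $ k) * f w \<partial>lborel)"
      by (rule conv_sum_exchange) (auto intro: int)
    have "ennreal \<bar>\<Sum>k\<in>UNIV. conv (akernel \<gamma> k j) f v * v $ k\<bar>
        \<le> (\<integral>\<^sup>+ w. ennreal \<bar>e w * uvec (v - w) v $ j * f w\<bar> \<partial>lborel)"
      unfolding T2 row_id e_def by (rule abs_int_le)
    also have "\<dots> \<le> (\<integral>\<^sup>+ w. ennreal (2 * (e w * (jbr w)\<^sup>2 * \<bar>f w\<bar>)) \<partial>lborel)"
    proof (intro nn_integral_mono ennreal_leI)
      fix w
      have e0: "e w \<ge> 0" unfolding e_def by simp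
      have "\<bar>uvec (v - w) v $ j\<bar> \<le> 2 * (jbr w)\<^sup>2"
        using component_le_norm_cart[of "uvec (v - w) v" j] uvec_norm[of v w] jbr_sq(4)[of w] by linarith
      then have "\<bar>e w * uvec (v - w) v $ j\<bar> \<le> e w * (2 * (jbr w)\<^sup>2)"
        using e0 by (simp add: abs_mult mult_left_mono)
      then have "\<bar>e w * uvec (v - w) v $ j\<bar> * \<bar>f w\<bar> \<le> e w * (2 * (jbr w)\<^sup>2) * \<bar>f w\<bar>"
        by (intro mult_right_mono) auto
      then show "\<bar>e w * uvec (v - w) v $ j * f w\<bar> \<le> 2 * (e w * (jbr w)\<^sup>2 * \<bar>f w\<bar>)"
        by (simp add: abs_mult mult_ac)
    qed
    also have "\<dots> = 2 * J"
      unfolding Je by (subst nn_cmult_real) auto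
    finally have B2: "ennreal \<bar>\<Sum>k\<in>UNIV. conv (akernel \<gamma> k j) f v * v $ k\<bar> \<le> 2 * J" .
    have "ennreal \<bar>conv (akernel \<gamma> i j) f v\<bar> \<le> (\<integral>\<^sup>+ w. ennreal \<bar>akernel \<gamma> i j (v - w) * f w\<bar> \<partial>lborel)"
      unfolding conv_def by (rule abs_int_le)
    also have "\<dots> \<le> J"
      unfolding Je by (intro nn_integral_mono ennreal_leI) (simp add: bnd)
    finally have B3: "ennreal \<bar>conv (akernel \<gamma> i j) f v\<bar> \<le> J" .
    have "ennreal (\<bar>\<Sum>k\<in>UNIV. \<Sum>l\<in>UNIV. conv (akernel \<gamma> k l) f v * v $ k * v $ l\<bar>
                    + \<bar>\<Sum>k\<in>UNIV. conv (akernel \<gamma> k j) f v * v $ k\<bar>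
                    + \<bar>conv (akernel \<gamma> i j) f v\<bar>)
        = ennreal \<bar>\<Sum>k\<in>UNIV. \<Sum>l\<in>UNIV. conv (akernel \<gamma> k l) f v * v $ k * v $ l\<bar>
          + ennreal \<bar>\<Sum>k\<in>UNIV. conv (akernel \<gamma> k j) f v * v $ k\<bar>
          + ennreal \<bar>conv (akernel \<gamma> i j) f v\<bar>"
      by (simp add: ennreal_plus)
    also have "\<dots> \<le> 2 * J + 2 * J + J"
      using B1 B2 B3 by (intro add_mono)
    also have "\<dots> = 5 * J"
    proof -
      have "(5::ennreal) * J = (2 + 2 + 1) * J" by simp
      also have "\<dots> = 2 * J + 2 * J + J" by (simp only: distrib_right mult_1)
      finally show ?thesis by simp
    qed
    finally show ?thesis unfolding J_def .
  qed
qed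

lemma E_b:
  fixes f :: "R3 \<Rightarrow> real" and v :: R3 and \<gamma> :: real
  assumes [measurable]: "f \<in> borel_measurable lborel"
  shows "ennreal \<bar>conv (bkernel \<gamma> j) f v\<bar>
    \<le> 2 * (\<integral>\<^sup>+ w. ennreal (norm (v - w) powr (\<gamma> + 1) * jbr w powr 0 * \<bar>f w\<bar>) \<partial>lborel)"
proof -
  have "ennreal \<bar>conv (bkernel \<gamma> j) f v\<bar> \<le> (\<integral>\<^sup>+ w. ennreal \<bar>bkernel \<gamma> j (v - w) * f w\<bar> \<partial>lborel)"
    unfolding conv_def by (rule abs_int_le)
  also have "\<dots> \<le> (\<integral>\<^sup>+ w. ennreal (2 * (norm (v - w) powr (\<gamma> + 1) * jbr w powr 0 * \<bar>f w\<bar>)) \<partial>lborel)"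
  proof (intro nn_integral_mono ennreal_leI)
    fix w
    have "\<bar>bkernel \<gamma> j (v - w) * f w\<bar> \<le> 2 * norm (v - w) powr (\<gamma> + 1) * \<bar>f w\<bar>"
      unfolding abs_mult by (intro mult_right_mono bk_abs) auto
    then show "\<bar>bkernel \<gamma> j (v - w) * f w\<bar> \<le> 2 * (norm (v - w) powr (\<gamma> + 1) * jbr w powr 0 * \<bar>f w\<bar>)"
      using jbr_pos[of w] by (simp add: mult_ac)
  qed
  also have "\<dots> = 2 * (\<integral>\<^sup>+ w. ennreal (norm (v - w) powr (\<gamma> + 1) * jbr w powr 0 * \<bar>f w\<bar>) \<partial>lborel)"
    by (subst nn_cmult_real) auto
  finally show ?thesis .
qed



theorem lemma4p2:
  fixes \<gamma> :: real
  assumes "-3 \<le> \<gamma>" and "\<gamma> < -2"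
  shows
    "(\<forall>(p::ennreal) (\<theta>::real).
        ennreal (3 / (3 + \<gamma> + 2)) < p \<and> \<theta> > 2 + 3 * (1 - inv_exp p) \<longrightarrow>
        (\<exists>C::real. \<forall>(f::R3 \<Rightarrow> real) (v::R3) (i::3) (j::3).
           f \<in> borel_measurable lborel \<longrightarrow>
           ennreal (\<bar>\<Sum>k\<in>UNIV. \<Sum>l\<in>UNIV. conv (akernel \<gamma> k l) f v * v $ k * v $ l\<bar>
                    + \<bar>\<Sum>k\<in>UNIV. conv (akernel \<gamma> k j) f v * v $ k\<bar>
                    + \<bar>conv (akernel \<gamma> i j) f v\<bar>)
             \<le> ennreal (C * jbr v powr (\<gamma> + 2)) * wLp_norm p (\<lambda>x. jbr x powr \<theta>) f))
     \<and>
     (\<forall>(p::ennreal) (\<theta>'::real).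
        ennreal (3 / (3 + \<gamma> + 1)) < p \<and> \<theta>' > 3 * (1 - inv_exp p) \<longrightarrow>
        (\<exists>C::real. \<forall>(f::R3 \<Rightarrow> real) (v::R3) (j::3).
           f \<in> borel_measurable lborel \<longrightarrow>
           ennreal \<bar>conv (bkernel \<gamma> j) f v\<bar>
             \<le> ennreal (C * jbr v powr (\<gamma> + 1)) * wLp_norm p (\<lambda>x. jbr x powr \<theta>') f))"
proof (intro conjI allI impI)
  fix p :: ennreal and \<theta> :: real
  assume h: "ennreal (3 / (3 + \<gamma> + 2)) < p \<and> \<theta> > 2 + 3 * (1 - inv_exp p)"
  have a3: "3 + \<gamma> + 2 = 3 + (\<gamma> + 2)" by simp
  have hp: "ennreal (3 / (3 + (\<gamma> + 2))) < p" using h unfolding a3 by simp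
  have ht: "\<theta> - 2 > 3 * (1 - inv_exp p)" using h by simp
  obtain C where C: "C > 0" and M: "\<And>f v. f \<in> borel_measurable lborel \<Longrightarrow>
      (\<integral>\<^sup>+ w. ennreal (norm (v - w) powr (\<gamma> + 2) * jbr w powr 2 * \<bar>f w\<bar>) \<partial>lborel)
        \<le> ennreal (C * jbr v powr (\<gamma> + 2)) * wLp_norm p (\<lambda>x. jbr x powr \<theta>) f"
    using M_gen[where a="\<gamma> + 2" and \<beta>=2 and \<theta>=\<theta> and p=p] assms hp ht by auto
  show "\<exists>C::real. \<forall>(f::R3 \<Rightarrow> real) (v::R3) (i::3) (j::3).
           f \<in> borel_measurable lborel \<longrightarrow>
           ennreal (\<bar>\<Sum>k\<in>UNIV. \<Sum>l\<in>UNIV. conv (akernel \<gamma> k l) f v * v $ k * v $ l\<bar>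
                    + \<bar>\<Sum>k\<in>UNIV. conv (akernel \<gamma> k j) f v * v $ k\<bar>
                    + \<bar>conv (akernel \<gamma> i j) f v\<bar>)
             \<le> ennreal (C * jbr v powr (\<gamma> + 2)) * wLp_norm p (\<lambda>x. jbr x powr \<theta>) f"
  proof (intro exI[of _ "5 * C"] allI impI)
    fix f :: "R3 \<Rightarrow> real" and v :: R3 and i j :: 3
    assume f: "f \<in> borel_measurable lborel"
    have "ennreal (\<bar>\<Sum>k\<in>UNIV. \<Sum>l\<in>UNIV. conv (akernel \<gamma> k l) f v * v $ k * v $ l\<bar>
                    + \<bar>\<Sum>k\<in>UNIV. conv (akernel \<gamma> k j) f v * v $ k\<bar>
                    + \<bar>conv (akernel \<gamma> i j) f v\<bar>)
        \<le> 5 * (\<integral>\<^sup>+ w. ennreal (norm (v - w) powr (\<gamma> + 2) * jbr w powr 2 * \<bar>f w\<bar>) \<partial>lborel)"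
      by (rule E_a[OF f])
    also have "\<dots> \<le> 5 * (ennreal (C * jbr v powr (\<gamma> + 2)) * wLp_norm p (\<lambda>x. jbr x powr \<theta>) f)"
      by (intro mult_left_mono M[OF f]) simp
    also have "\<dots> = ennreal (5 * C * jbr v powr (\<gamma> + 2)) * wLp_norm p (\<lambda>x. jbr x powr \<theta>) f"
    proof -
      have "ennreal (5 * C * jbr v powr (\<gamma> + 2)) = 5 * ennreal (C * jbr v powr (\<gamma> + 2))"
        by (simp add: mult.assoc ennreal_mult')
      then show ?thesis by (simp add: mult.assoc)
    qed
    finally show "ennreal (\<bar>\<Sum>k\<in>UNIV. \<Sum>l\<in>UNIV. conv (akernel \<gamma> k l) f v * v $ k * v $ l\<bar>
                    + \<bar>\<Sum>k\<in>UNIV. conv (akernel \<gamma> k j) f v * v $ k\<bar>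
                    + \<bar>conv (akernel \<gamma> i j) f v\<bar>)
             \<le> ennreal (5 * C * jbr v powr (\<gamma> + 2)) * wLp_norm p (\<lambda>x. jbr x powr \<theta>) f" .
  qed
next
  fix p :: ennreal and \<theta>' :: real
  assume h: "ennreal (3 / (3 + \<gamma> + 1)) < p \<and> \<theta>' > 3 * (1 - inv_exp p)"
  have a3: "3 + \<gamma> + 1 = 3 + (\<gamma> + 1)" by simp
  have hp: "ennreal (3 / (3 + (\<gamma> + 1))) < p" using h unfolding a3 by simp
  have ht: "\<theta>' - 0 > 3 * (1 - inv_exp p)" using h by simp
  obtain C where C: "C > 0" and M: "\<And>f v. f \<in> borel_measurable lborel \<Longrightarrow>
      (\<integral>\<^sup>+ w. ennreal (norm (v - w) powr (\<gamma> + 1) * jbr w powr 0 * \<bar>f w\<bar>) \<partial>lborel)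
        \<le> ennreal (C * jbr v powr (\<gamma> + 1)) * wLp_norm p (\<lambda>x. jbr x powr \<theta>') f"
    using M_gen[where a="\<gamma> + 1" and \<beta>=0 and \<theta>=\<theta>' and p=p] assms hp ht by auto
  show "\<exists>C::real. \<forall>(f::R3 \<Rightarrow> real) (v::R3) (j::3).
           f \<in> borel_measurable lborel \<longrightarrow>
           ennreal \<bar>conv (bkernel \<gamma> j) f v\<bar>
             \<le> ennreal (C * jbr v powr (\<gamma> + 1)) * wLp_norm p (\<lambda>x. jbr x powr \<theta>') f"
  proof (intro exI[of _ "2 * C"] allI impI)
    fix f :: "R3 \<Rightarrow> real" and v :: R3 and j :: 3
    assume f: "f \<in> borel_measurable lborel"
    have "ennreal \<bar>conv (bkernel \<gamma> j) f v\<bar>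
        \<le> 2 * (\<integral>\<^sup>+ w. ennreal (norm (v - w) powr (\<gamma> + 1) * jbr w powr 0 * \<bar>f w\<bar>) \<partial>lborel)"
      by (rule E_b[OF f])
    also have "\<dots> \<le> 2 * (ennreal (C * jbr v powr (\<gamma> + 1)) * wLp_norm p (\<lambda>x. jbr x powr \<theta>') f)"
      by (intro mult_left_mono M[OF f]) simp
    also have "\<dots> = ennreal (2 * C * jbr v powr (\<gamma> + 1)) * wLp_norm p (\<lambda>x. jbr x powr \<theta>') f"
    proof -
      have "ennreal (2 * C * jbr v powr (\<gamma> + 1)) = 2 * ennreal (C * jbr v powr (\<gamma> + 1))"
        by (simp add: mult.assoc ennreal_mult')
      then show ?thesis by (simp add: mult.assoc)
    qed
    finally show "ennreal \<bar>conv (bkernel \<gamma> j) f v\<bar>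
             \<le> ennreal (2 * C * jbr v powr (\<gamma> + 1)) * wLp_norm p (\<lambda>x. jbr x powr \<theta>') f" .
  qed
qed

end
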